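(* Let $r>0$, $\kappa>0$, $\tau>0$, $p\in[0,1]$ with $\varepsilon=pe^{-\tau}<1$, and let $q\in\mathbb{R}$. Let $H:\mathcal{C}\to\mathbb{R}$, \[ H(\phi)=1-\phi_S(0)-\phi_I(-\kappa)+\int_{-\kappa}^{0}\big(1-r\phi_S(s)\big)\phi_I(s)\,ds, \] and $\mathcal{F}_q:=H^{-1}(q)$. Then: (1) $\mathcal{F}_q\cap\mathcal{E}_0=\{\widehat{u(q)}\}$, where $u(q)=(1-q,0,q)$. (2) $\mathcal{F}_q\cap\mathcal{E}_I=\{\widehat{v(q)}\}$, where $v(q)=(v_S,v_I(q),v_Q(q))$ with $v_S=\frac{1}{r(1-\varepsilon)}$, \[ v_I(q)=\frac{1-\varepsilon}{1-\varepsilon+\varepsilon\kappa}(q_c-q),\qquad v_Q(q)=\frac{\varepsilon\kappa}{1-\varepsilon+\varepsilon\kappa}(q_c-q)+q, \] and $q_c=1-\frac{1}{r}\frac{1}{1-\varepsilon}$.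
   Context: $\mathcal{C}=\{\phi\in C([-\tau-\kappa,0],\mathbb{R}^3):\phi_S+\phi_I+\phi_Q\equiv1\}$, the phase space of the SIQ delay system $\dot S=-rSI+I+r\varepsilon (SI)(t-\tau-\kappa)$, $\dot I=rSI-I-r\varepsilon(SI)(t-\tau)$, $\dot Q=r\varepsilon[(SI)(t-\tau)-(SI)(t-\tau-\kappa)]$. For $u\in\mathbb{R}^3$ with $u_1+u_2+u_3=1$, $\hat u$ is the constant function with value $u$. $\mathcal{E}_0=\{\hat\phi\in\mathcal{C}\text{ constant}:\phi_I=0\}$ (disease-free equilibria) and $\mathcal{E}_I=\{\hat\phi\in\mathcal{C}\text{ constant}:\phi_S=\frac{1}{r(1-\varepsilon)}\}$. *)

theory Defs
  imports "HOL-Analysis.Analysis"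
begin

text \<open>A point of the state space R^3 is a triple (S, I, Q).
  Elements of the phase space are functions on [-tau-kappa, 0],
  represented extensionally: they are (0,0,0) outside that interval.\<close>

definition cS :: "real \<times> real \<times> real \<Rightarrow> real" where "cS u = fst u"
definition cI :: "real \<times> real \<times> real \<Rightarrow> real" where "cI u = fst (snd u)"
definition cQ :: "real \<times> real \<times> real \<Rightarrow> real" where "cQ u = snd (snd u)"

definition Cspace :: "real \<Rightarrow> real \<Rightarrow> (real \<Rightarrow> real \<times> real \<times> real) set" where
  "Cspace \<tau> \<kappa> = {\<phi>. continuous_on {-\<tau>-\<kappa>..0} \<phi>
      \<and> (\<forall>t\<in>{-\<tau>-\<kappa>..0}. cS (\<phi> t) + cI (\<phi> t) + cQ (\<phi> t) = 1)
      \<and> (\<forall>t. t \<notin> {-\<tau>-\<kappa>..0} \<longrightarrow> \<phi> t = (0,0,0))}"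

definition hat :: "real \<Rightarrow> real \<Rightarrow> real \<times> real \<times> real \<Rightarrow> (real \<Rightarrow> real \<times> real \<times> real)" where
  "hat \<tau> \<kappa> u = (\<lambda>t. if t \<in> {-\<tau>-\<kappa>..0} then u else (0,0,0))"

definition E0 :: "real \<Rightarrow> real \<Rightarrow> (real \<Rightarrow> real \<times> real \<times> real) set" where
  "E0 \<tau> \<kappa> = {hat \<tau> \<kappa> u | u. cS u + cI u + cQ u = 1 \<and> cI u = 0}"

definition EI :: "real \<Rightarrow> real \<Rightarrow> real \<Rightarrow> real \<Rightarrow> (real \<Rightarrow> real \<times> real \<times> real) set" where
  "EI r \<epsilon> \<tau> \<kappa> = {hat \<tau> \<kappa> u | u. cS u + cI u + cQ u = 1 \<and> cS u = 1 / (r * (1 - \<epsilon>))}"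

definition H :: "real \<Rightarrow> real \<Rightarrow> (real \<Rightarrow> real \<times> real \<times> real) \<Rightarrow> real" where
  "H r \<kappa> \<phi> = 1 - cS (\<phi> 0) - cI (\<phi> (-\<kappa>))
      + integral {-\<kappa>..0} (\<lambda>s. (1 - r * cS (\<phi> s)) * cI (\<phi> s))"

definition Fq :: "real \<Rightarrow> real \<Rightarrow> real \<Rightarrow> real \<Rightarrow> (real \<Rightarrow> real \<times> real \<times> real) set" where
  "Fq r \<tau> \<kappa> q = {\<phi> \<in> Cspace \<tau> \<kappa>. H r \<kappa> \<phi> = q}"

end

theory Submission
  imports Defs
begin

lemma hat_in:
  assumes "cS u + cI u + cQ u = 1"
  shows "hat \<tau> \<kappa> u \<in> Cspace \<tau> \<kappa>"
proof -
  have "continuous_on {-\<tau>-\<kappa>..0} (hat \<tau> \<kappa> u)"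
  proof (rule continuous_on_cong[THEN iffD2, OF refl])
    show "continuous_on {-\<tau>-\<kappa>..0} (\<lambda>_. u)" by simp
  qed (auto simp: hat_def)
  thus ?thesis using assms unfolding Cspace_def hat_def by auto
qed

lemma H_hat:
  assumes "\<kappa> > 0" "\<tau> > 0"
  shows "H r \<kappa> (hat \<tau> \<kappa> u) = 1 - cS u - cI u + \<kappa> * ((1 - r * cS u) * cI u)"
proof -
  have "integral {-\<kappa>..0} (\<lambda>s. (1 - r * cS (hat \<tau> \<kappa> u s)) * cI (hat \<tau> \<kappa> u s))
      = integral {-\<kappa>..0} (\<lambda>s. (1 - r * cS u) * cI u)"
    by (rule integral_cong) (use assms in \<open>auto simp: hat_def\<close>)
  also have "\<dots> = \<kappa> * ((1 - r * cS u) * cI u)" using assms by simp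
  finally show ?thesis using assms unfolding H_def by (simp add: hat_def)
qed

theorem theorem7:
  fixes r \<kappa> \<tau> p q \<epsilon> :: real
  assumes "r > 0" and "\<kappa> > 0" and "\<tau> > 0" and "0 \<le> p" and "p \<le> 1"
    and "\<epsilon> = p * exp (- \<tau>)" and "\<epsilon> < 1"
  shows "Fq r \<tau> \<kappa> q \<inter> E0 \<tau> \<kappa> = {hat \<tau> \<kappa> (1 - q, 0, q)}
    \<and> (let qc = 1 - (1 / r) * (1 / (1 - \<epsilon>));
           vS = 1 / (r * (1 - \<epsilon>));
           vI = (1 - \<epsilon>) / (1 - \<epsilon> + \<epsilon> * \<kappa>) * (qc - q);
           vQ = (\<epsilon> * \<kappa>) / (1 - \<epsilon> + \<epsilon> * \<kappa>) * (qc - q) + q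
       in Fq r \<tau> \<kappa> q \<inter> EI r \<epsilon> \<tau> \<kappa> = {hat \<tau> \<kappa> (vS, vI, vQ)})"
proof -
  have e0: "\<epsilon> \<ge> 0" using assms by simp
  define D where "D = 1 - \<epsilon> + \<epsilon> * \<kappa>"
  have D: "D > 0" unfolding D_def using e0 assms by (smt (verit) mult_nonneg_nonneg)
  have rr: "r * (1 - \<epsilon>) \<noteq> 0" using assms by simp
  have r0: "r \<noteq> 0" and e1: "1 - \<epsilon> \<noteq> 0" using assms by auto
  have part1: "Fq r \<tau> \<kappa> q \<inter> E0 \<tau> \<kappa> = {hat \<tau> \<kappa> (1 - q, 0, q)}"
  proof
    show "Fq r \<tau> \<kappa> q \<inter> E0 \<tau> \<kappa> \<subseteq> {hat \<tau> \<kappa> (1 - q, 0, q)}"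
    proof
      fix \<phi> assume "\<phi> \<in> Fq r \<tau> \<kappa> q \<inter> E0 \<tau> \<kappa>"
      then obtain a b c where ph: "\<phi> = hat \<tau> \<kappa> (a,b,c)" "a + b + c = 1" "b = 0"
        "H r \<kappa> \<phi> = q"
        unfolding Fq_def E0_def cS_def cI_def cQ_def by auto
      hence "1 - a = q" using H_hat[OF assms(2,3)] by (simp add: cS_def cI_def)
      thus "\<phi> \<in> {hat \<tau> \<kappa> (1 - q, 0, q)}" using ph
        by (simp add: algebra_simps) (smt (verit))
    qed
    show "{hat \<tau> \<kappa> (1 - q, 0, q)} \<subseteq> Fq r \<tau> \<kappa> q \<inter> E0 \<tau> \<kappa>"
      using hat_in[of "(1-q,0,q)"] H_hat[OF assms(2,3)]
      unfolding Fq_def E0_def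
      apply (simp add: cS_def cI_def cQ_def)
      apply (rule exI[of _ "1-q"], rule exI[of _ q])
      by (simp add: cS_def cI_def cQ_def)
  qed
  define qc where "qc = 1 - (1 / r) * (1 / (1 - \<epsilon>))"
  define vS where "vS = 1 / (r * (1 - \<epsilon>))"
  define vI where "vI = (1 - \<epsilon>) / D * (qc - q)"
  define vQ where "vQ = (\<epsilon> * \<kappa>) / D * (qc - q) + q"
  have key: "\<And>b. 1 - vS - b + \<kappa> * ((1 - r * vS) * b) = qc - b * D / (1 - \<epsilon>)"
  proof -
    fix b
    have qv: "qc = 1 - vS" unfolding qc_def vS_def by simp
    have rv: "1 - r * vS = - \<epsilon> / (1 - \<epsilon>)" unfolding vS_def using r0 e1
      by (simp add: field_simps)
    have "b * D / (1 - \<epsilon>) = b + \<kappa> * (\<epsilon> / (1 - \<epsilon>) * b)"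
      unfolding D_def using e1 by (simp add: field_simps)
    thus "1 - vS - b + \<kappa> * ((1 - r * vS) * b) = qc - b * D / (1 - \<epsilon>)"
      unfolding qv rv by simp
  qed
  have sum: "vS + vI + vQ = 1"
  proof -
    have qv: "vS = 1 - qc" unfolding qc_def vS_def by simp
    have "vI + vQ = ((1 - \<epsilon>) + \<epsilon> * \<kappa>) / D * (qc - q) + q"
      unfolding vI_def vQ_def by (simp add: add_divide_distrib distrib_right)
    also have "\<dots> = qc" using D unfolding D_def by simp
    finally show ?thesis unfolding qv by simp
  qed
  have part2: "Fq r \<tau> \<kappa> q \<inter> EI r \<epsilon> \<tau> \<kappa> = {hat \<tau> \<kappa> (vS, vI, vQ)}"
  proof
    show "Fq r \<tau> \<kappa> q \<inter> EI r \<epsilon> \<tau> \<kappa> \<subseteq> {hat \<tau> \<kappa> (vS, vI, vQ)}"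
    proof
      fix \<phi> assume "\<phi> \<in> Fq r \<tau> \<kappa> q \<inter> EI r \<epsilon> \<tau> \<kappa>"
      then obtain a b c where ph: "\<phi> = hat \<tau> \<kappa> (a,b,c)" "a + b + c = 1" "a = vS"
        "H r \<kappa> \<phi> = q"
        unfolding Fq_def EI_def cS_def cI_def cQ_def vS_def by auto
      hence "qc - b * D / (1 - \<epsilon>) = q" using H_hat[OF assms(2,3)] key
        by (simp add: cS_def cI_def)
      hence b: "b = vI" unfolding vI_def using D e1 by (simp add: field_simps)
      hence "c = vQ" using ph sum by simp
      thus "\<phi> \<in> {hat \<tau> \<kappa> (vS, vI, vQ)}" using ph b by auto
    qed
    have "qc - vI * D / (1 - \<epsilon>) = q" unfolding vI_def using D e1 by (simp add: field_simps)
    thus "{hat \<tau> \<kappa> (vS, vI, vQ)} \<subseteq> Fq r \<tau> \<kappa> q \<inter> EI r \<epsilon> \<tau> \<kappa>"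
      using hat_in[of "(vS,vI,vQ)"] H_hat[OF assms(2,3)] sum key[of vI]
      unfolding Fq_def EI_def
      apply (simp add: cS_def cI_def cQ_def)
      by (metis vS_def)
  qed
  show ?thesis using part1 part2
    unfolding Let_def qc_def[symmetric] vS_def[symmetric] D_def[symmetric]
      vI_def[symmetric] vQ_def[symmetric] by simp
qed

end
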